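(* Let $(B_t)_{t\ge 0}$ be a standard Brownian motion. Then the process $(tB_t)_{t>0}$ is a process with proportional increments on $]0,+\infty[$: writing $N_t=tB_t$ and $\mathcal{F}_t=\sigma(N_u:u\le t)$, for every $t>0$ with $N_t\neq 0$ and every $s\ge 0$, $E(N_{t+s}-N_t\mid\mathcal{F}_t)=\frac{s}{t}N_t$ a.s.
   Context: A stochastic process $(N_t)_{t>0}$ on a probability space, with natural filtration $\mathcal{F}_t=\sigma(N_u: u\le t)$, is called a process with proportional increments on $]0,+\infty[$ if for all $t>0$ with $N_t\neq 0$ and all $s\ge 0$: $E(N_{t+s}-N_t\mid\mathcal{F}_t)=\frac{s}{t}N_t$ almost surely. *)

theory Defs
  imports "HOL-Probability.Probability"
begin

definition std_brownian_motion :: "'a measure \<Rightarrow> (real \<Rightarrow> 'a \<Rightarrow> real) \<Rightarrow> bool" where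
  "std_brownian_motion M B \<longleftrightarrow>
     prob_space M \<and>
     (\<forall>t\<ge>0. B t \<in> borel_measurable M) \<and>
     (AE x in M. B 0 x = 0) \<and>
     (AE x in M. continuous_on {0..} (\<lambda>t. B t x)) \<and>
     (\<forall>ts::real list. sorted_wrt (<) ts \<and> (\<forall>u\<in>set ts. 0 \<le> u) \<longrightarrow>
        prob_space.indep_vars M (\<lambda>_. borel)
          (\<lambda>i x. B (ts ! Suc i) x - B (ts ! i) x) {..<length ts - 1}) \<and>
     (\<forall>s t. 0 \<le> s \<and> s < t \<longrightarrow>
        distributed M lborel (\<lambda>x. B t x - B s x) (\<lambda>y. ennreal (normal_density 0 (sqrt (t - s)) y)))"

definition natural_filtration :: "'a measure \<Rightarrow> (real \<Rightarrow> 'a \<Rightarrow> real) \<Rightarrow> real \<Rightarrow> 'a measure" where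
  "natural_filtration M N t =
     sigma (space M) {N u -` A \<inter> space M | u A. u \<in> {0<..t} \<and> A \<in> sets borel}"

end

theory Submission
  imports Defs
begin

lemma key_prob:
  assumes bm: "std_brownian_motion M B" and t: "0 < t" and s: "0 < s"
    and J: "finite J" "J \<subseteq> {0<..t}" and A: "\<forall>u\<in>J. A u \<in> sets borel" and S: "S \<in> sets borel"
  shows "measure M ({x\<in>space M. \<forall>u\<in>J. u * B u x \<in> A u} \<inter> ((\<lambda>x. B (t+s) x - B t x) -` S \<inter> space M))
       = measure M {x\<in>space M. \<forall>u\<in>J. u * B u x \<in> A u} * measure M ((\<lambda>x. B (t+s) x - B t x) -` S \<inter> space M)"
proof -
  interpret prob_space M using bm unfolding std_brownian_motion_def by auto
  have meas: "\<And>u. 0 \<le> u \<Longrightarrow> B u \<in> borel_measurable M" using bm unfolding std_brownian_motion_def by auto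
  have B0: "AE x in M. B 0 x = 0" using bm unfolding std_brownian_motion_def by auto
  have indep_all: "\<And>ts::real list. sorted_wrt (<) ts \<Longrightarrow> (\<forall>u\<in>set ts. 0 \<le> u) \<Longrightarrow>
        indep_vars (\<lambda>_. borel) (\<lambda>i x. B (ts ! Suc i) x - B (ts ! i) x) {..<length ts - 1}"
    using bm unfolding std_brownian_motion_def by auto
  define X where "X = (\<lambda>x. B (t+s) x - B t x)"
  define c where "c = {x\<in>space M. \<forall>u\<in>J. u * B u x \<in> A u}"
  define c' where "c' = {x\<in>space M. \<forall>u\<in>J. u * (B u x - B 0 x) \<in> A u}"
  define d where "d = X -` S \<inter> space M"
  obtain Lm where Lm: "sorted_wrt (<) Lm" "set Lm = J - {t}"
    using finite_set_strict_sorted[of "J - {t}"] J(1) by (metis finite_Diff)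
  define n where "n = length Lm"
  define L where "L = 0 # Lm @ [t, t+s]"
  have Lmr: "\<forall>x\<in>set Lm. 0 < x \<and> x < t" using Lm(2) J(2) by fastforce
  have Lsorted: "sorted_wrt (<) L" unfolding L_def using Lm(1) Lmr t s
    by (auto simp: sorted_wrt_append)
  have Lnn: "\<forall>u\<in>set L. 0 \<le> u" unfolding L_def using Lmr t s by auto
  have lenL: "length L = n + 3" unfolding L_def n_def by simp
  define Y where "Y = (\<lambda>i x. B (L ! Suc i) x - B (L ! i) x)"
  have ind: "indep_vars (\<lambda>_. borel) Y {..<n+2}"
    using indep_all[OF Lsorted Lnn] unfolding Y_def lenL by simp
  have L0: "L ! 0 = 0" unfolding L_def by simp
  have Lt: "L ! (n+1) = t" unfolding L_def n_def by (simp add: nth_append)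
  have Lts: "L ! (n+2) = t + s" unfolding L_def n_def by (simp add: nth_append)
  have Lmid: "\<And>j. j < n \<Longrightarrow> L ! Suc j = Lm ! j" unfolding L_def n_def by (simp add: nth_append)
  have YX: "Y (n+1) = X" unfolding Y_def X_def using Lt Lts by (simp add: numeral_eq_Suc)
  define E where "E = (\<lambda>i. {Y i -` A \<inter> space M | A. A \<in> sets (borel :: real measure)})"
  have indE: "indep_sets E {..<n+2}" using ind unfolding indep_vars_def2 E_def by simp
  have UI: "(\<Union>j. case_bool {..<n+1} {n+1} j) = {..<(n+2::nat)}"
    by (auto simp: UNIV_bool)
  have col: "indep_sets (\<lambda>j. sigma_sets (space M) (\<Union>i\<in>case_bool {..<n+1} {n+1} j. E i)) UNIV"
  proof (rule indep_sets_collect_sigma)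
    show "indep_sets E (\<Union>j\<in>UNIV. case_bool {..<n + 1} {n + 1} j)" using indE UI by simp
    show "Int_stable (E i)" for i
      unfolding Int_stable_def E_def
    proof (clarify)
      fix A1 A2 :: "real set" assume "A1 \<in> sets borel" "A2 \<in> sets borel"
      then show "\<exists>A. Y i -` A1 \<inter> space M \<inter> (Y i -` A2 \<inter> space M) = Y i -` A \<inter> space M \<and> A \<in> sets borel"
        by (intro exI[of _ "A1 \<inter> A2"]) auto
    qed
    show "disjoint_family_on (case_bool {..<n + 1} {n + 1}) UNIV"
      unfolding disjoint_family_on_def by (auto split: bool.split)
  qed
  have d_in: "d \<in> sigma_sets (space M) (\<Union>i\<in>case_bool {..<n+1} {n+1} False. E i)"
    unfolding d_def E_def using YX S by (auto intro!: sigma_sets.Basic)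
  have c'_in: "c' \<in> sigma_sets (space M) (\<Union>i\<in>case_bool {..<n+1} {n+1} True. E i)"
  proof -
    define MS where "MS = sigma (space M) (\<Union>i\<in>{..<n+1}. E i)"
    have gen_sub: "(\<Union>i\<in>{..<n+1}. E i) \<subseteq> Pow (space M)" unfolding E_def by auto
    have spMS: "space MS = space M" unfolding MS_def using gen_sub by (simp add: space_measure_of_conv)
    have setsMS: "sets MS = sigma_sets (space M) (\<Union>i\<in>{..<n+1}. E i)" unfolding MS_def using gen_sub by simp
    have Ymeas: "Y i \<in> borel_measurable MS" if "i < n+1" for i
    proof (rule measurableI)
      fix a :: "real set" assume "a \<in> sets borel"
      then have "Y i -` a \<inter> space M \<in> (\<Union>i\<in>{..<n+1}. E i)" unfolding E_def using that by auto
      then show "Y i -` a \<inter> space MS \<in> sets MS" unfolding setsMS spMS by auto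
    qed auto
    have each: "{x\<in>space MS. u * (B u x - B 0 x) \<in> A u} \<in> sets MS" if u: "u \<in> J" for u
    proof -
      obtain k where k: "k \<le> n+1" "L ! k = u"
      proof (cases "u = t")
        case True then show ?thesis using that[of "n+1"] Lt by simp
      next
        case False
        then have "u \<in> set Lm" using Lm u by auto
        then obtain j where "j < n" "Lm ! j = u" unfolding n_def by (auto simp: in_set_conv_nth)
        then show ?thesis using that[of "Suc j"] Lmid by simp
      qed
      have tel: "B u x - B 0 x = (\<Sum>i<k. Y i x)" for x
        unfolding Y_def using sum_lessThan_telescope[of "\<lambda>j. B (L ! j) x" k] k L0 by simp
      have fm: "(\<lambda>x. u * (\<Sum>i<k. Y i x)) \<in> borel_measurable MS"
        using Ymeas k by (auto intro!: borel_measurable_sum borel_measurable_times)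
      have "{x\<in>space MS. u * (B u x - B 0 x) \<in> A u} = (\<lambda>x. u * (\<Sum>i<k. Y i x)) -` A u \<inter> space MS"
        using tel by auto
      also have "\<dots> \<in> sets MS" using measurable_sets[OF fm] A u by auto
      finally show ?thesis .
    qed
    have "{x\<in>space MS. \<forall>u\<in>J. u * (B u x - B 0 x) \<in> A u} \<in> sets MS"
      by (rule sets.sets_Collect_finite_All[OF each J(1)])
    then show ?thesis unfolding c'_def using spMS setsMS by simp
  qed
  have fac: "prob (c' \<inter> d) = prob c' * prob d"
    using indep_setsD[OF col, of UNIV "case_bool c' d"] c'_in d_in
    by (simp add: UNIV_bool Int_commute)
  have Jpos: "\<And>u. u \<in> J \<Longrightarrow> 0 \<le> u" using J by auto
  have c_ev: "c \<in> events" unfolding c_def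
    using Jpos A meas by (intro sets.sets_Collect_finite_All J(1)) (auto intro!: measurable_sets)
  have c'_ev: "c' \<in> events" unfolding c'_def
    using Jpos A meas by (intro sets.sets_Collect_finite_All J(1)) (auto intro!: measurable_sets)
  have d_ev: "d \<in> events" unfolding d_def X_def using meas t s S by (auto intro!: measurable_sets)
  have ae1: "AE x in M. x \<in> c \<longleftrightarrow> x \<in> c'" using B0 unfolding c_def c'_def by (auto elim!: eventually_mono)
  have ae2: "AE x in M. x \<in> c \<inter> d \<longleftrightarrow> x \<in> c' \<inter> d" using ae1 by (auto elim!: eventually_mono)
  have "prob (c \<inter> d) = prob (c' \<inter> d)" by (rule measure_eq_AE[OF ae2]) (use c_ev c'_ev d_ev in auto)
  moreover have "prob c = prob c'" by (rule measure_eq_AE[OF ae1 c_ev c'_ev])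
  ultimately show ?thesis using fac unfolding c_def d_def X_def by simp
qed


lemma bm_integrable:
  assumes bm: "std_brownian_motion M B" and u: "0 \<le> u"
  shows "integrable M (B u)"
proof -
  interpret prob_space M using bm unfolding std_brownian_motion_def by auto
  have meas: "\<And>u. 0 \<le> u \<Longrightarrow> B u \<in> borel_measurable M" using bm unfolding std_brownian_motion_def by auto
  have B0: "AE x in M. B 0 x = 0" using bm unfolding std_brownian_motion_def by auto
  show ?thesis
  proof (cases "u = 0")
    case True
    have ae: "AE x in M. (\<lambda>_. 0::real) x = B 0 x" by (rule eventually_mono[OF B0]) simp
    show ?thesis using integrable_cong_AE_imp[OF _ meas[of 0] ae] True by simp
  next
    case False
    then have up: "0 < u" using u by simp
    have DD: "\<forall>s t. 0 \<le> s \<and> s < t \<longrightarrow>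
        distributed M lborel (\<lambda>x. B t x - B s x) (\<lambda>y. ennreal (normal_density 0 (sqrt (t - s)) y))"
      using bm unfolding std_brownian_motion_def by (elim conjE)
    have D: "distributed M lborel (\<lambda>x. B u x - B 0 x) (\<lambda>y. ennreal (normal_density 0 (sqrt (u - 0)) y))"
      using DD[rule_format, of 0 u] up by simp
    have "integrable M (\<lambda>x. B u x - B 0 x)"
      using distributed_integrable_var[OF D] integrable_normal_moment_nz_1[of "sqrt u" 0] up by simp
    moreover have ae: "AE x in M. B u x - B 0 x = B u x" by (rule eventually_mono[OF B0]) simp
    ultimately show ?thesis using integrable_cong_AE_imp[OF _ meas[OF u]] by blast
  qed
qed

lemma main_fixed:
  assumes bm: "std_brownian_motion M B" and t: "0 < t" and s: "0 \<le> s"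
  defines "N \<equiv> (\<lambda>t x. t * B t x)"
  shows "AE x in M. real_cond_exp M (natural_filtration M N t) (\<lambda>y. N (t + s) y - N t y) x
                = (s / t) * N t x"
proof -
  interpret prob_space M using bm unfolding std_brownian_motion_def by auto
  have meas: "\<And>u. 0 \<le> u \<Longrightarrow> B u \<in> borel_measurable M" using bm unfolding std_brownian_motion_def by auto
  define F where "F = natural_filtration M N t"
  define G where "G = {N u -` A \<inter> space M | u A. u \<in> {0<..t} \<and> A \<in> sets (borel :: real measure)}"
  have Nmeas: "\<And>u. 0 \<le> u \<Longrightarrow> N u \<in> borel_measurable M" unfolding N_def using meas by auto
  have G_sub: "G \<subseteq> sets M" unfolding G_def using Nmeas by (auto intro!: measurable_sets)
  have G_pow: "G \<subseteq> Pow (space M)" unfolding G_def by auto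
  have spF: "space F = space M" unfolding F_def natural_filtration_def G_def[symmetric]
    using G_pow by (simp add: space_measure_of_conv)
  have setsF: "sets F = sigma_sets (space M) G" unfolding F_def natural_filtration_def G_def[symmetric]
    using G_pow by simp
  have subalg: "subalgebra M F" unfolding subalgebra_def spF setsF
    using sets.sigma_sets_subset[OF G_sub] by simp
  have sfs: "sigma_finite_subalgebra M F"
    unfolding sigma_finite_subalgebra_def
    using subalg prob_space_restr_to_subalg[OF subalg prob_space_axioms] by (simp add: prob_space_imp_sigma_finite)
  have NuF: "N u \<in> borel_measurable F" if "u \<in> {0<..t}" for u
  proof (rule measurableI)
    fix a :: "real set" assume "a \<in> sets borel"
    then have "N u -` a \<inter> space M \<in> G" unfolding G_def using that by auto
    then show "N u -` a \<inter> space F \<in> sets F" unfolding setsF spF by auto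
  qed auto
  define X where "X = (\<lambda>x. B (t+s) x - B t x)"
  have intX: "integrable M X" unfolding X_def using bm_integrable[OF bm] t s by auto
  have EX0: "(\<integral>x. indicator A x * X x \<partial>M) = 0" if AF: "A \<in> sets F" for A
  proof (cases "s = 0")
    case True then show ?thesis unfolding X_def by simp
  next
    case False
    then have sp: "0 < s" using s by simp
    define C where "C = {{x\<in>space M. \<forall>u\<in>J. u * B u x \<in> Af u} | J Af. finite J \<and> J \<subseteq> {0<..t} \<and> (\<forall>u\<in>J. Af u \<in> sets (borel::real measure))}"
    define D where "D = {X -` S \<inter> space M | S. S \<in> sets (borel::real measure)}"
    have CF: "C \<subseteq> sets F"
    proof
      fix c assume "c \<in> C"
      then obtain J Af where c: "c = {x\<in>space M. \<forall>u\<in>J. u * B u x \<in> Af u}" "finite J" "J \<subseteq> {0<..t}"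
          "\<forall>u\<in>J. Af u \<in> sets (borel::real measure)" unfolding C_def by blast
      have "{x\<in>space F. \<forall>u\<in>J. N u x \<in> Af u} \<in> sets F"
      proof (rule sets.sets_Collect_finite_All[OF _ c(2)])
        fix u assume u: "u \<in> J"
        have "{x\<in>space F. N u x \<in> Af u} = N u -` Af u \<inter> space F" by auto
        also have "\<dots> \<in> sets F" using measurable_sets[OF NuF, of u "Af u"] c(3,4) u by auto
        finally show "{x\<in>space F. N u x \<in> Af u} \<in> sets F" .
      qed
      then show "c \<in> sets F" using c(1) spF unfolding N_def by simp
    qed
    have sigC: "sigma_sets (space M) C = sets F"
      unfolding setsF
    proof (rule sigma_sets_eqI)
      fix a assume "a \<in> C" then show "a \<in> sigma_sets (space M) G" using CF setsF by auto
    next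
      fix b assume "b \<in> G"
      then obtain u Af where b: "b = N u -` Af \<inter> space M" "u \<in> {0<..t}" "Af \<in> sets (borel::real measure)"
        unfolding G_def by blast
      have beq: "b = {x\<in>space M. \<forall>v\<in>{u}. v * B v x \<in> (\<lambda>_. Af) v}" unfolding b(1) N_def by auto
      have "b \<in> C" unfolding C_def
        by (rule CollectI, rule exI[of _ "{u}"], rule exI[of _ "\<lambda>_. Af"]) (use beq b(2,3) in simp)
      then show "b \<in> sigma_sets (space M) C" by auto
    qed
    have Cst: "Int_stable C"
    proof (rule Int_stableI)
      fix a b assume "a \<in> C" "b \<in> C"
      then obtain J1 A1 J2 A2 where a: "a = {x\<in>space M. \<forall>u\<in>J1. u * B u x \<in> A1 u}" "finite J1" "J1 \<subseteq> {0<..t}"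
          "\<forall>u\<in>J1. A1 u \<in> sets (borel::real measure)"
        and b: "b = {x\<in>space M. \<forall>u\<in>J2. u * B u x \<in> A2 u}" "finite J2" "J2 \<subseteq> {0<..t}"
          "\<forall>u\<in>J2. A2 u \<in> sets (borel::real measure)"
        unfolding C_def by blast
      define Af where "Af u = (if u \<in> J1 then A1 u else UNIV) \<inter> (if u \<in> J2 then A2 u else UNIV)" for u
      have "a \<inter> b = {x\<in>space M. \<forall>u\<in>J1 \<union> J2. u * B u x \<in> Af u}" unfolding Af_def a(1) b(1) by auto
      moreover have "\<forall>u\<in>J1 \<union> J2. Af u \<in> sets (borel::real measure)" unfolding Af_def using a(4) b(4) by auto
      moreover have "finite (J1 \<union> J2)" "J1 \<union> J2 \<subseteq> {0<..t}" using a b by auto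
      ultimately show "a \<inter> b \<in> C" unfolding C_def by blast
    qed
    have Dst: "Int_stable D"
      unfolding Int_stable_def D_def
    proof (clarify)
      fix A1 A2 :: "real set" assume "A1 \<in> sets borel" "A2 \<in> sets borel"
      then show "\<exists>A. X -` A1 \<inter> space M \<inter> (X -` A2 \<inter> space M) = X -` A \<inter> space M \<and> A \<in> sets borel"
        by (intro exI[of _ "A1 \<inter> A2"]) auto
    qed
    have Xm: "X \<in> borel_measurable M" unfolding X_def using meas t s by auto
    have DM: "D \<subseteq> events" unfolding D_def using Xm by (auto intro!: measurable_sets)
    have CM: "C \<subseteq> events" using CF subalg unfolding subalgebra_def by auto
    have indCD: "indep_set C D"
    proof (rule indep_setI[OF CM DM])
      fix a b assume "a \<in> C" "b \<in> D"
      then obtain J Af S where a: "a = {x\<in>space M. \<forall>u\<in>J. u * B u x \<in> Af u}" "finite J" "J \<subseteq> {0<..t}"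
          "\<forall>u\<in>J. Af u \<in> sets (borel::real measure)" and b: "b = X -` S \<inter> space M" "S \<in> sets (borel::real measure)"
        unfolding C_def D_def by blast
      show "prob (a \<inter> b) = prob a * prob b"
        using key_prob[OF bm t sp a(2,3,4) b(2)] unfolding a(1) b(1) X_def by simp
    qed
    have "indep_sets (\<lambda>i. sigma_sets (space M) (case_bool C D i)) UNIV"
      using indCD unfolding indep_set_def by (rule indep_sets_sigma) (simp split: bool.split add: Cst Dst)
    then have indS: "indep_set (sigma_sets (space M) C) (sigma_sets (space M) D)"
      unfolding indep_set_def by (rule indep_sets_mono_sets) (auto split: bool.split)
    have AM: "A \<in> sets M" using AF subalg unfolding subalgebra_def by auto
    have iv: "indep_var borel (indicator A :: 'a \<Rightarrow> real) borel X"
      unfolding indep_var_eq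
    proof (intro conjI)
      show "random_variable borel (indicator A :: 'a \<Rightarrow> real)" using AM by simp
      show "random_variable borel X" by (rule Xm)
      have sub: "sigma_sets (space M) {(indicator A :: 'a \<Rightarrow> real) -` S \<inter> space M | S. S \<in> sets borel} \<subseteq> sigma_sets (space M) C"
      proof (rule sigma_sets_mono)
        have im: "(indicator A :: 'a \<Rightarrow> real) \<in> borel_measurable F" using AF by simp
        show "{(indicator A :: 'a \<Rightarrow> real) -` S \<inter> space M | S. S \<in> sets borel} \<subseteq> sigma_sets (space M) C"
          unfolding sigC using measurable_sets[OF im] spF by auto
      qed
      show "indep_set (sigma_sets (space M) {(indicator A :: 'a \<Rightarrow> real) -` S \<inter> space M | S. S \<in> sets borel})
          (sigma_sets (space M) {X -` S \<inter> space M | S. S \<in> sets borel})"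
        using indS unfolding indep_set_def D_def
        by (rule indep_sets_mono_sets) (use sub in \<open>auto split: bool.split\<close>)
    qed
    have "(\<integral>x. indicator A x * X x \<partial>M) = (\<integral>x. indicator A x \<partial>M) * (\<integral>x. X x \<partial>M)"
      by (rule indep_var_lebesgue_integral[OF iv]) (use intX AM in \<open>auto intro!: integrable_real_indicator simp: emeasure_eq_measure\<close>)
    moreover have "(\<integral>x. X x \<partial>M) = 0"
    proof -
      have DD: "\<forall>s t. 0 \<le> s \<and> s < t \<longrightarrow>
        distributed M lborel (\<lambda>x. B t x - B s x) (\<lambda>y. ennreal (normal_density 0 (sqrt (t - s)) y))"
        using bm unfolding std_brownian_motion_def by (elim conjE)
      have D: "distributed M lborel X (\<lambda>y. ennreal (normal_density 0 (sqrt s) y))"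
        using DD[rule_format, of t "t+s"] t sp unfolding X_def by simp
      show ?thesis using normal_distributed_expectation[of "sqrt s" X 0] D sp by simp
    qed
    ultimately show ?thesis by simp
  qed
  have intNt: "integrable M (N t)" unfolding N_def using bm_integrable[OF bm] t by auto
  have "AE x in M. real_cond_exp M F (\<lambda>y. N (t + s) y - N t y) x = (\<lambda>y. (s / t) * N t y) x"
  proof (rule sigma_finite_subalgebra.real_cond_exp_charact[OF sfs])
    show "integrable M (\<lambda>y. N (t + s) y - N t y)" unfolding N_def using bm_integrable[OF bm] t s by auto
    show "integrable M (\<lambda>y. s / t * N t y)" using intNt by auto
    show "(\<lambda>y. s / t * N t y) \<in> borel_measurable F" using NuF[of t] t by auto
    fix A assume AF: "A \<in> sets F"
    then have AM: "A \<in> sets M" using subalg unfolding subalgebra_def by auto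
    have feq: "N (t + s) y - N t y = (t + s) * X y + s / t * N t y" for y
      unfolding N_def X_def using t by (simp add: field_simps)
    have "(\<integral>x\<in>A. (N (t + s) x - N t x) \<partial>M) = (\<integral>x. indicator A x * ((t + s) * X x) + indicator A x * (s / t * N t x) \<partial>M)"
      unfolding set_lebesgue_integral_def feq by (simp add: algebra_simps)
    also have "\<dots> = (\<integral>x. indicator A x * ((t + s) * X x) \<partial>M) + (\<integral>x. indicator A x * (s / t * N t x) \<partial>M)"
    proof -
      have i1: "integrable M (\<lambda>x. indicator A x * ((t + s) * X x))"
        using integrable_mult_right[OF integrable_mult_indicator[OF AM intX], of "t+s"] by (simp add: mult.left_commute)
      have i2: "integrable M (\<lambda>x. indicator A x * (s / t * N t x))"
        using integrable_mult_right[OF integrable_mult_indicator[OF AM intNt], of "s/t"] by (simp add: mult.left_commute)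
      show ?thesis by (rule Bochner_Integration.integral_add[OF i1 i2])
    qed
    also have "(\<integral>x. indicator A x * ((t + s) * X x) \<partial>M) = (t + s) * (\<integral>x. indicator A x * X x \<partial>M)"
      by (simp add: mult.left_commute)
    also have "\<dots> = 0" using EX0[OF AF] by simp
    finally show "(\<integral>x\<in>A. (N (t + s) x - N t x) \<partial>M) = (\<integral>x\<in>A. (s / t * N t x) \<partial>M)"
      unfolding set_lebesgue_integral_def by simp
  qed
  then show ?thesis unfolding F_def by simp
qed

theorem mainTheorem3:
  fixes M :: "'a measure" and B :: "real \<Rightarrow> 'a \<Rightarrow> real"
  assumes "std_brownian_motion M B"
  defines "N \<equiv> (\<lambda>t x. t * B t x)"
  shows "\<forall>t s. 0 < t \<and> 0 \<le> s \<longrightarrow>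
           (AE x in M. N t x \<noteq> 0 \<longrightarrow>
              real_cond_exp M (natural_filtration M N t) (\<lambda>y. N (t + s) y - N t y) x
                = (s / t) * N t x)"
proof (intro allI impI)
  fix t s :: real assume ts: "0 < t \<and> 0 \<le> s"
  have "AE x in M. real_cond_exp M (natural_filtration M N t) (\<lambda>y. N (t + s) y - N t y) x = (s / t) * N t x"
    unfolding N_def using main_fixed[OF assms(1)] ts by blast
  then show "AE x in M. N t x \<noteq> 0 \<longrightarrow>
              real_cond_exp M (natural_filtration M N t) (\<lambda>y. N (t + s) y - N t y) x = (s / t) * N t x"
    by (rule eventually_mono) simp
qed

end
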